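(* Let $n\ge1$ and let $\mathcal{A},\mathcal{B}\subseteq D_n$. Then $\mathcal{A}$ and $\mathcal{B}$ are right-homometric if and only if $$\mathbf{iv}(A_+)+\mathbf{iv}(A_-)=\mathbf{iv}(B_+)+\mathbf{iv}(B_-)\quad\text{and}\quad \mathbf{ifunc}(A_+,A_-)=\mathbf{ifunc}(B_+,B_-).$$ Moreover, $\mathcal{A}$ and $\mathcal{B}$ are left-homometric if and only if $$\mathbf{iv}(A_+)+\mathbf{iv}(A_-)=\mathbf{iv}(B_+)+\mathbf{iv}(B_-)\quad\text{and}\quad \mathbf{ifunc}(I_0A_+,A_-)=\mathbf{ifunc}(I_0B_+,B_-).$$ (All equalities are equalities of functions $\mathbb{Z}_n\to\mathbb{Z}_{\ge0}$.)
   Context: $D_n$ is the set of pairs $(k,\epsilon)$, $k\in\mathbb{Z}_n$, $\epsilon\in\{1,-1\}$, with multiplication $(k,\epsilon)(l,\eta)=(k+\epsilon l,\epsilon\eta)$. Right interval: ${}^r\mathbf{int}(x,y)=x^{-1}y$, i.e. ${}^r\mathbf{int}((k_1,\epsilon_1),(k_2,\epsilon_2))=((k_2-k_1)/\epsilon_1,\epsilon_2/\epsilon_1)$; left interval: ${}^l\mathbf{int}(x,y)=yx^{-1}$, i.e. $(k_2-(\epsilon_2/\epsilon_1)k_1,\epsilon_2/\epsilon_1)$. For $\mathcal{A}\subseteq D_n$ and $g\in D_n$, ${}^r\mathbf{iv}(\mathcal{A})(g)=\#\{(x,y)\in\mathcal{A}^2: {}^r\mathbf{int}(x,y)=g\}$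 and ${}^l\mathbf{iv}(\mathcal{A})(g)=\#\{(x,y)\in\mathcal{A}^2:{}^l\mathbf{int}(x,y)=g\}$. Two subsets of $D_n$ are right-homometric (resp. left-homometric) if they have the same ${}^r\mathbf{iv}$ (resp. ${}^l\mathbf{iv}$). For $\mathcal{A}\subseteq D_n$ put $A_+=\{k\in\mathbb{Z}_n:(k,1)\in\mathcal{A}\}$ and $A_-=\{k\in\mathbb{Z}_n:(k,-1)\in\mathcal{A}\}$ (similarly $B_\pm$ for $\mathcal{B}$). For $A,B\subseteq\mathbb{Z}_n$: $\mathbf{ifunc}(A,B)(k)=\#\{(a,b)\in A\times B: b-a=k\}$, $\mathbf{iv}(A)=\mathbf{ifunc}(A,A)$, and $I_0A=\{-a:a\in A\}$. *)

theory Defs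
  imports Main
begin

definition Zn :: "int \<Rightarrow> int set" where
  "Zn n = {0..<n}"

definition Dn :: "int \<Rightarrow> (int \<times> int) set" where
  "Dn n = {0..<n} \<times> {1, -1}"

definition dmult :: "int \<Rightarrow> int \<times> int \<Rightarrow> int \<times> int \<Rightarrow> int \<times> int" where
  "dmult n x y = ((fst x + snd x * fst y) mod n, snd x * snd y)"

definition dinv :: "int \<Rightarrow> int \<times> int \<Rightarrow> int \<times> int" where
  "dinv n x = ((- (snd x * fst x)) mod n, snd x)"

definition rint :: "int \<Rightarrow> int \<times> int \<Rightarrow> int \<times> int \<Rightarrow> int \<times> int" where
  "rint n x y = dmult n (dinv n x) y"

definition lint :: "int \<Rightarrow> int \<times> int \<Rightarrow> int \<times> int \<Rightarrow> int \<times> int" where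
  "lint n x y = dmult n y (dinv n x)"

definition riv :: "int \<Rightarrow> (int \<times> int) set \<Rightarrow> int \<times> int \<Rightarrow> nat" where
  "riv n A g = card {(x, y). x \<in> A \<and> y \<in> A \<and> rint n x y = g}"

definition liv :: "int \<Rightarrow> (int \<times> int) set \<Rightarrow> int \<times> int \<Rightarrow> nat" where
  "liv n A g = card {(x, y). x \<in> A \<and> y \<in> A \<and> lint n x y = g}"

definition right_homometric :: "int \<Rightarrow> (int \<times> int) set \<Rightarrow> (int \<times> int) set \<Rightarrow> bool" where
  "right_homometric n A B \<longleftrightarrow> (\<forall>g \<in> Dn n. riv n A g = riv n B g)"

definition left_homometric :: "int \<Rightarrow> (int \<times> int) set \<Rightarrow> (int \<times> int) set \<Rightarrow> bool" where
  "left_homometric n A B \<longleftrightarrow> (\<forall>g \<in> Dn n. liv n A g = liv n B g)"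

definition plus_part :: "(int \<times> int) set \<Rightarrow> int set" where
  "plus_part A = {k. (k, 1) \<in> A}"

definition minus_part :: "(int \<times> int) set \<Rightarrow> int set" where
  "minus_part A = {k. (k, -1) \<in> A}"

definition ifunc :: "int \<Rightarrow> int set \<Rightarrow> int set \<Rightarrow> int \<Rightarrow> nat" where
  "ifunc n A B k = card {(a, b). a \<in> A \<and> b \<in> B \<and> (b - a) mod n = k}"

definition iv :: "int \<Rightarrow> int set \<Rightarrow> int \<Rightarrow> nat" where
  "iv n A = ifunc n A A"

definition I0 :: "int \<Rightarrow> int set \<Rightarrow> int set" where
  "I0 n A = (\<lambda>a. (- a) mod n) ` A"

end

theory Submission imports Defs begin

lemma rint_simp: "rint n (k1,e1) (k2,e2) = ((e1*(k2-k1)) mod n, e1*e2)"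
proof -
  have "(- (e1 * k1) mod n + e1 * k2) mod n = (- (e1 * k1) + e1 * k2) mod n"
    by (rule mod_add_left_eq)
  thus ?thesis unfolding rint_def dmult_def dinv_def by (simp add: right_diff_distrib)
qed

lemma lint_simp: "lint n (k1,e1) (k2,e2) = ((k2 - e2*e1*k1) mod n, e2*e1)"
proof -
  have "(k2 + e2 * (- (e1 * k1) mod n)) mod n = (k2 + e2 * (- (e1 * k1))) mod n"
    by (metis mod_add_right_eq mod_mult_right_eq)
  thus ?thesis unfolding lint_def dmult_def dinv_def by (simp add: algebra_simps)
qed

lemma finP: "A \<subseteq> Dn n \<Longrightarrow> finite (plus_part A)"
  by (rule finite_subset[of _ "{0..<n}"]) (auto simp: plus_part_def Dn_def)
lemma finM: "A \<subseteq> Dn n \<Longrightarrow> finite (minus_part A)"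
  by (rule finite_subset[of _ "{0..<n}"]) (auto simp: minus_part_def Dn_def)
lemma riv_plus:
  assumes A: "A \<subseteq> Dn n"
  shows "riv n A (g,1) = iv n (plus_part A) g + iv n (minus_part A) g"
proof -
  define S1 where "S1 = {(a,b). a\<in>plus_part A \<and> b\<in>plus_part A \<and> (b-a) mod n = g}"
  define S2 where "S2 = {(a,b). a\<in>minus_part A \<and> b\<in>minus_part A \<and> (b-a) mod n = g}"
  have sA: "\<And>k e. (k,e)\<in>A \<Longrightarrow> e = 1 \<or> e = -1" using A by (auto simp: Dn_def)
  have eq: "{(x,y). x\<in>A \<and> y\<in>A \<and> rint n x y = (g,1)}
     = (\<lambda>(a,b). ((a,1::int),(b,1::int)))`S1 \<union> (\<lambda>(a,b). ((b,-1::int),(a,-1::int)))`S2"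
  proof (rule set_eqI)
    fix p :: "(int\<times>int)\<times>(int\<times>int)"
    obtain k1 e1 k2 e2 where p: "p = ((k1,e1),(k2,e2))" by (cases p) auto
    show "p \<in> {(x,y). x\<in>A \<and> y\<in>A \<and> rint n x y = (g,1)} \<longleftrightarrow> p \<in> (\<lambda>(a,b). ((a,1::int),(b,1::int)))`S1 \<union> (\<lambda>(a,b). ((b,-1::int),(a,-1::int)))`S2"
    proof
      assume "p \<in> {(x,y). x\<in>A \<and> y\<in>A \<and> rint n x y = (g,1)}"
      then have h: "(k1,e1)\<in>A" "(k2,e2)\<in>A" "(e1*(k2-k1)) mod n = g" "e1*e2 = 1"
        by (simp_all add: p rint_simp)
      from sA[OF h(1)] show "p \<in> (\<lambda>(a,b). ((a,1::int),(b,1::int)))`S1 \<union> (\<lambda>(a,b). ((b,-1::int),(a,-1::int)))`S2"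
      proof
        assume e1: "e1 = 1"
        then have e2: "e2 = 1" using h by simp
        have "(k1,k2)\<in>S1" using h e1 e2 by (simp add: S1_def plus_part_def)
        moreover have "p = (\<lambda>(a,b). ((a,1::int),(b,1::int))) (k1,k2)" by (simp add: p e1 e2)
        ultimately show ?thesis by blast
      next
        assume e1: "e1 = -1"
        then have e2: "e2 = -1" using h by simp
        have "(k2,k1)\<in>S2" using h e1 e2 by (simp add: S2_def minus_part_def)
        moreover have "p = (\<lambda>(a,b). ((b,-1::int),(a,-1::int))) (k2,k1)" by (simp add: p e1 e2)
        ultimately show ?thesis by blast
      qed
    next
      assume "p \<in> (\<lambda>(a,b). ((a,1::int),(b,1::int)))`S1 \<union> (\<lambda>(a,b). ((b,-1::int),(a,-1::int)))`S2"
      then show "p \<in> {(x,y). x\<in>A \<and> y\<in>A \<and> rint n x y = (g,1)}"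
        by (auto simp: S1_def S2_def plus_part_def minus_part_def rint_simp)
    qed
  qed
  have f1: "finite S1" using finP[OF A]
    by (rule_tac finite_subset[of _ "plus_part A \<times> plus_part A"]) (auto simp: S1_def)
  have f2: "finite S2" using finM[OF A]
    by (rule_tac finite_subset[of _ "minus_part A \<times> minus_part A"]) (auto simp: S2_def)
  have i1: "inj_on (\<lambda>(a,b). ((a,1::int),(b,1::int))) S1" by (auto simp: inj_on_def)
  have i2: "inj_on (\<lambda>(a,b). ((b,-1::int),(a,-1::int))) S2" by (auto simp: inj_on_def)
  have "riv n A (g,1) = card S1 + card S2"
    unfolding riv_def eq
    by (subst card_Un_disjoint) (auto simp: f1 f2 card_image[OF i1] card_image[OF i2])
  thus ?thesis by (simp add: iv_def ifunc_def S1_def S2_def)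
qed
lemma riv_minus:
  assumes A: "A \<subseteq> Dn n"
  shows "riv n A (g,-1) = 2 * ifunc n (plus_part A) (minus_part A) g"
proof -
  define S1 where "S1 = {(a,b). a\<in>plus_part A \<and> b\<in>minus_part A \<and> (b-a) mod n = g}"
  have sA: "\<And>k e. (k,e)\<in>A \<Longrightarrow> e = 1 \<or> e = -1" using A by (auto simp: Dn_def)
  have eq: "{(x,y). x\<in>A \<and> y\<in>A \<and> rint n x y = (g,-1)}
     = (\<lambda>(a,b). ((a,1::int),(b,-1::int)))`S1 \<union> (\<lambda>(a,b). ((b,-1::int),(a,1::int)))`S1"
  proof (rule set_eqI)
    fix p :: "(int\<times>int)\<times>(int\<times>int)"
    obtain k1 e1 k2 e2 where p: "p = ((k1,e1),(k2,e2))" by (cases p) auto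
    show "p \<in> {(x,y). x\<in>A \<and> y\<in>A \<and> rint n x y = (g,-1)} \<longleftrightarrow> p \<in> (\<lambda>(a,b). ((a,1::int),(b,-1::int)))`S1 \<union> (\<lambda>(a,b). ((b,-1::int),(a,1::int)))`S1"
    proof
      assume "p \<in> {(x,y). x\<in>A \<and> y\<in>A \<and> rint n x y = (g,-1)}"
      then have h: "(k1,e1)\<in>A" "(k2,e2)\<in>A" "(e1*(k2-k1)) mod n = g" "e1*e2 = -1"
        by (simp_all add: p rint_simp)
      from sA[OF h(1)] show "p \<in> (\<lambda>(a,b). ((a,1::int),(b,-1::int)))`S1 \<union> (\<lambda>(a,b). ((b,-1::int),(a,1::int)))`S1"
      proof
        assume e1: "e1 = 1"
        then have e2: "e2 = -1" using h by simp
        have "(k1,k2)\<in>S1" using h e1 e2 by (simp add: S1_def plus_part_def minus_part_def)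
        moreover have "p = (\<lambda>(a,b). ((a,1::int),(b,-1::int))) (k1,k2)" by (simp add: p e1 e2)
        ultimately show ?thesis by blast
      next
        assume e1: "e1 = -1"
        then have e2: "e2 = 1" using h by simp
        have "(k2,k1)\<in>S1" using h e1 e2 by (simp add: S1_def plus_part_def minus_part_def)
        moreover have "p = (\<lambda>(a,b). ((b,-1::int),(a,1::int))) (k2,k1)" by (simp add: p e1 e2)
        ultimately show ?thesis by blast
      qed
    next
      assume "p \<in> (\<lambda>(a,b). ((a,1::int),(b,-1::int)))`S1 \<union> (\<lambda>(a,b). ((b,-1::int),(a,1::int)))`S1"
      then show "p \<in> {(x,y). x\<in>A \<and> y\<in>A \<and> rint n x y = (g,-1)}"
        by (auto simp: S1_def plus_part_def minus_part_def rint_simp)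
    qed
  qed
  have f1: "finite S1" using finP[OF A] finM[OF A]
    by (rule_tac finite_subset[of _ "plus_part A \<times> minus_part A"]) (auto simp: S1_def)
  have i1: "inj_on (\<lambda>(a,b). ((a,1::int),(b,-1::int))) S1" by (auto simp: inj_on_def)
  have i2: "inj_on (\<lambda>(a,b). ((b,-1::int),(a,1::int))) S1" by (auto simp: inj_on_def)
  have "riv n A (g,-1) = card S1 + card S1"
    unfolding riv_def eq
    by (subst card_Un_disjoint) (auto simp: f1 card_image[OF i1] card_image[OF i2])
  thus ?thesis by (simp add: ifunc_def S1_def)
qed

lemma liv_plus:
  assumes A: "A \<subseteq> Dn n"
  shows "liv n A (g,1) = iv n (plus_part A) g + iv n (minus_part A) g"
proof -
  define S1 where "S1 = {(a,b). a\<in>plus_part A \<and> b\<in>plus_part A \<and> (b-a) mod n = g}"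
  define S2 where "S2 = {(a,b). a\<in>minus_part A \<and> b\<in>minus_part A \<and> (b-a) mod n = g}"
  have sA: "\<And>k e. (k,e)\<in>A \<Longrightarrow> e = 1 \<or> e = -1" using A by (auto simp: Dn_def)
  have eq: "{(x,y). x\<in>A \<and> y\<in>A \<and> lint n x y = (g,1)}
     = (\<lambda>(a,b). ((a,1::int),(b,1::int)))`S1 \<union> (\<lambda>(a,b). ((a,-1::int),(b,-1::int)))`S2"
  proof (rule set_eqI)
    fix p :: "(int\<times>int)\<times>(int\<times>int)"
    obtain k1 e1 k2 e2 where p: "p = ((k1,e1),(k2,e2))" by (cases p) auto
    show "p \<in> {(x,y). x\<in>A \<and> y\<in>A \<and> lint n x y = (g,1)} \<longleftrightarrow> p \<in> (\<lambda>(a,b). ((a,1::int),(b,1::int)))`S1 \<union> (\<lambda>(a,b). ((a,-1::int),(b,-1::int)))`S2"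
    proof
      assume "p \<in> {(x,y). x\<in>A \<and> y\<in>A \<and> lint n x y = (g,1)}"
      then have h0: "(k1,e1)\<in>A" "(k2,e2)\<in>A" "lint n (k1,e1) (k2,e2) = (g,1)"
        by (simp_all add: p)
      have hh: "(k2 - e2*e1*k1) mod n = g \<and> e2*e1 = 1"
        using h0(3) unfolding lint_simp prod.inject .
      have h: "(k1,e1)\<in>A" "(k2,e2)\<in>A" "(k2 - e2*e1*k1) mod n = g" "e2*e1 = 1"
        using h0 hh by auto
      from sA[OF h(1)] show "p \<in> (\<lambda>(a,b). ((a,1::int),(b,1::int)))`S1 \<union> (\<lambda>(a,b). ((a,-1::int),(b,-1::int)))`S2"
      proof
        assume e1: "e1 = 1"
        then have e2: "e2 = 1" using h by simp
        have "(k1,k2)\<in>S1" using h e1 e2 by (simp add: S1_def plus_part_def)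
        moreover have "p = (\<lambda>(a,b). ((a,1::int),(b,1::int))) (k1,k2)" by (simp add: p e1 e2)
        ultimately show ?thesis by blast
      next
        assume e1: "e1 = -1"
        then have e2: "e2 = -1" using h by simp
        have "(k1,k2)\<in>S2" using h e1 e2 by (simp add: S2_def minus_part_def)
        moreover have "p = (\<lambda>(a,b). ((a,-1::int),(b,-1::int))) (k1,k2)" by (simp add: p e1 e2)
        ultimately show ?thesis by blast
      qed
    next
      assume "p \<in> (\<lambda>(a,b). ((a,1::int),(b,1::int)))`S1 \<union> (\<lambda>(a,b). ((a,-1::int),(b,-1::int)))`S2"
      then show "p \<in> {(x,y). x\<in>A \<and> y\<in>A \<and> lint n x y = (g,1)}"
        by (auto simp: S1_def S2_def plus_part_def minus_part_def lint_simp)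
    qed
  qed
  have f1: "finite S1" using finP[OF A]
    by (rule_tac finite_subset[of _ "plus_part A \<times> plus_part A"]) (auto simp: S1_def)
  have f2: "finite S2" using finM[OF A]
    by (rule_tac finite_subset[of _ "minus_part A \<times> minus_part A"]) (auto simp: S2_def)
  have i1: "inj_on (\<lambda>(a,b). ((a,1::int),(b,1::int))) S1" by (auto simp: inj_on_def)
  have i2: "inj_on (\<lambda>(a,b). ((a,-1::int),(b,-1::int))) S2" by (auto simp: inj_on_def)
  have "liv n A (g,1) = card S1 + card S2"
    unfolding liv_def eq
    by (subst card_Un_disjoint) (auto simp: f1 f2 card_image[OF i1] card_image[OF i2])
  thus ?thesis by (simp add: iv_def ifunc_def S1_def S2_def)
qed

lemma liv_minus:
  assumes A: "A \<subseteq> Dn n"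
  shows "liv n A (g,-1) = 2 * card {(a,b). a\<in>plus_part A \<and> b\<in>minus_part A \<and> (a+b) mod n = g}"
proof -
  define S1 where "S1 = {(a,b). a\<in>plus_part A \<and> b\<in>minus_part A \<and> (a+b) mod n = g}"
  have sA: "\<And>k e. (k,e)\<in>A \<Longrightarrow> e = 1 \<or> e = -1" using A by (auto simp: Dn_def)
  have eq: "{(x,y). x\<in>A \<and> y\<in>A \<and> lint n x y = (g,-1)}
     = (\<lambda>(a,b). ((a,1::int),(b,-1::int)))`S1 \<union> (\<lambda>(a,b). ((b,-1::int),(a,1::int)))`S1"
  proof (rule set_eqI)
    fix p :: "(int\<times>int)\<times>(int\<times>int)"
    obtain k1 e1 k2 e2 where p: "p = ((k1,e1),(k2,e2))" by (cases p) auto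
    show "p \<in> {(x,y). x\<in>A \<and> y\<in>A \<and> lint n x y = (g,-1)} \<longleftrightarrow> p \<in> (\<lambda>(a,b). ((a,1::int),(b,-1::int)))`S1 \<union> (\<lambda>(a,b). ((b,-1::int),(a,1::int)))`S1"
    proof
      assume "p \<in> {(x,y). x\<in>A \<and> y\<in>A \<and> lint n x y = (g,-1)}"
      then have h0: "(k1,e1)\<in>A" "(k2,e2)\<in>A" "lint n (k1,e1) (k2,e2) = (g,-1)"
        by (simp_all add: p)
      have hh: "(k2 - e2*e1*k1) mod n = g \<and> e2*e1 = -1"
        using h0(3) unfolding lint_simp prod.inject .
      have h: "(k1,e1)\<in>A" "(k2,e2)\<in>A" "(k2 - e2*e1*k1) mod n = g" "e2*e1 = -1"
        using h0 hh by auto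
      from sA[OF h(1)] show "p \<in> (\<lambda>(a,b). ((a,1::int),(b,-1::int)))`S1 \<union> (\<lambda>(a,b). ((b,-1::int),(a,1::int)))`S1"
      proof
        assume e1: "e1 = 1"
        then have e2: "e2 = -1" using h by simp
        have "(k1,k2)\<in>S1" using h e1 e2 by (simp add: S1_def plus_part_def minus_part_def add.commute)
        moreover have "p = (\<lambda>(a,b). ((a,1::int),(b,-1::int))) (k1,k2)" by (simp add: p e1 e2)
        ultimately show ?thesis by blast
      next
        assume e1: "e1 = -1"
        then have e2: "e2 = 1" using h by simp
        have "(k2,k1)\<in>S1" using h e1 e2 by (simp add: S1_def plus_part_def minus_part_def)
        moreover have "p = (\<lambda>(a,b). ((b,-1::int),(a,1::int))) (k2,k1)" by (simp add: p e1 e2)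
        ultimately show ?thesis by blast
      qed
    next
      assume "p \<in> (\<lambda>(a,b). ((a,1::int),(b,-1::int)))`S1 \<union> (\<lambda>(a,b). ((b,-1::int),(a,1::int)))`S1"
      then show "p \<in> {(x,y). x\<in>A \<and> y\<in>A \<and> lint n x y = (g,-1)}"
        by (auto simp: S1_def plus_part_def minus_part_def lint_simp add.commute)
    qed
  qed
  have f1: "finite S1" using finP[OF A] finM[OF A]
    by (rule_tac finite_subset[of _ "plus_part A \<times> minus_part A"]) (auto simp: S1_def)
  have i1: "inj_on (\<lambda>(a,b). ((a,1::int),(b,-1::int))) S1" by (auto simp: inj_on_def)
  have i2: "inj_on (\<lambda>(a,b). ((b,-1::int),(a,1::int))) S1" by (auto simp: inj_on_def)
  have "liv n A (g,-1) = card S1 + card S1"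
    unfolding liv_def eq
    by (subst card_Un_disjoint) (auto simp: f1 card_image[OF i1] card_image[OF i2])
  thus ?thesis by (simp add: S1_def)
qed

lemma ifunc_I0:
  assumes A: "A \<subseteq> Dn n"
  shows "ifunc n (I0 n (plus_part A)) (minus_part A) g
     = card {(a,b). a\<in>plus_part A \<and> b\<in>minus_part A \<and> (a+b) mod n = g}"
proof -
  define T where "T = {(a,b). a\<in>plus_part A \<and> b\<in>minus_part A \<and> (a+b) mod n = g}"
  have rng: "\<And>a. a \<in> plus_part A \<Longrightarrow> a mod n = a" using A
    by (auto simp: plus_part_def Dn_def)
  have eq: "{(a,b). a\<in>I0 n (plus_part A) \<and> b\<in>minus_part A \<and> (b-a) mod n = g}
     = (\<lambda>(a,b). ((-a) mod n, b)) ` T"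
  proof (rule set_eqI)
    fix p :: "int\<times>int"
    obtain x b where p: "p = (x,b)" by (cases p) auto
    show "p \<in> {(a,b). a\<in>I0 n (plus_part A) \<and> b\<in>minus_part A \<and> (b-a) mod n = g} \<longleftrightarrow> p \<in> (\<lambda>(a,b). ((-a) mod n, b)) ` T"
    proof
      assume "p \<in> {(a,b). a\<in>I0 n (plus_part A) \<and> b\<in>minus_part A \<and> (b-a) mod n = g}"
      then obtain a where a: "a \<in> plus_part A" "x = (-a) mod n" "b \<in> minus_part A" "(b - x) mod n = g"
        by (auto simp: p I0_def)
      have "(b - x) mod n = (b + a) mod n" unfolding a(2)
        by (metis diff_minus_eq_add mod_diff_right_eq)
      then have "(a,b) \<in> T" using a by (simp add: T_def add.commute)
      then show "p \<in> (\<lambda>(a,b). ((-a) mod n, b)) ` T" using a(2) p by force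
    next
      assume "p \<in> (\<lambda>(a,b). ((-a) mod n, b)) ` T"
      then obtain a where a: "a \<in> plus_part A" "x = (-a) mod n" "b \<in> minus_part A" "(a+b) mod n = g"
        by (auto simp: p T_def)
      have "(b - x) mod n = (b + a) mod n" unfolding a(2)
        by (metis diff_minus_eq_add mod_diff_right_eq)
      then show "p \<in> {(a,b). a\<in>I0 n (plus_part A) \<and> b\<in>minus_part A \<and> (b-a) mod n = g}"
        using a by (auto simp: p I0_def add.commute)
    qed
  qed
  have inj: "inj_on (\<lambda>(a,b). ((-a) mod n, b)) T"
  proof (rule inj_onI)
    fix x y assume hx: "x\<in>T" "y\<in>T" "(\<lambda>(a,b). ((-a) mod n, b)) x = (\<lambda>(a,b). ((-a) mod n, b)) y"
    obtain a b where x: "x = (a,b)" by (cases x) auto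
    obtain a' b' where y: "y = (a',b')" by (cases y) auto
    have h: "(a,b)\<in>T" "(a',b')\<in>T" "(-a) mod n = (-a') mod n" "b = b'" using hx x y by auto
    have "(- ((-a) mod n)) mod n = (- ((-a') mod n)) mod n" using h by simp
    then have "a mod n = a' mod n" by (simp add: mod_minus_eq)
    then have "a = a'" using h rng by (auto simp: T_def)
    thus "x = y" using x y h by simp
  qed
  have "ifunc n (I0 n (plus_part A)) (minus_part A) g = card ((\<lambda>(a,b). ((-a) mod n, b)) ` T)"
    unfolding ifunc_def eq ..
  also have "\<dots> = card T" by (rule card_image[OF inj])
  finally show ?thesis by (simp only: T_def)
qed
theorem mainTheorem2:
  fixes n :: int and A B :: "(int \<times> int) set"
  assumes "n \<ge> 1" and "A \<subseteq> Dn n" and "B \<subseteq> Dn n"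
  shows "(right_homometric n A B \<longleftrightarrow>
            (\<forall>k \<in> Zn n. iv n (plus_part A) k + iv n (minus_part A) k
                        = iv n (plus_part B) k + iv n (minus_part B) k)
          \<and> (\<forall>k \<in> Zn n. ifunc n (plus_part A) (minus_part A) k
                        = ifunc n (plus_part B) (minus_part B) k))
       \<and> (left_homometric n A B \<longleftrightarrow>
            (\<forall>k \<in> Zn n. iv n (plus_part A) k + iv n (minus_part A) k
                        = iv n (plus_part B) k + iv n (minus_part B) k)
          \<and> (\<forall>k \<in> Zn n. ifunc n (I0 n (plus_part A)) (minus_part A) k
                        = ifunc n (I0 n (plus_part B)) (minus_part B) k))"
proof -
  have D: "\<And>P. (\<forall>g\<in>Dn n. P g) \<longleftrightarrow> (\<forall>k\<in>Zn n. P (k,1) \<and> P (k,-1))"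
    by (auto simp: Dn_def Zn_def)
  show ?thesis
    unfolding right_homometric_def left_homometric_def D
    using assms(2,3)
    by (auto simp: riv_plus riv_minus liv_plus liv_minus ifunc_I0)
qed
end
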